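(* Let $k\geq 1$ and $n\geq 1$ be integers. Then 1. $B_{k,2n}=B_{k,n}\bigl(B_{k,n+1}+(1-k)B_{k,n-1}\bigr)$; 2. $B_{k,2n-1}=B_{k,n}^2+(1-k)B_{k,n-1}^2$.
   Context: For an integer $k\geq 1$, the generalized balancing numbers are defined by $B_{k,0}=0$, $B_{k,1}=1$ and $B_{k,n}=3kB_{k,n-1}+(1-k)B_{k,n-2}$ for $n\geq 2$. *)

theory Defs
  imports Main
begin

fun B :: "int \<Rightarrow> nat \<Rightarrow> int" where
  "B k 0 = 0"
| "B k (Suc 0) = 1"
| "B k (Suc (Suc n)) = 3 * k * B k (Suc n) + (1 - k) * B k n"

end

theory Submission
  imports Defs
begin

lemma B_add: "B k (m + n + 1) = B k (m + 1) * B k (n + 1) + (1 - k) * B k m * B k n"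
proof (induction k m rule: B.induct)
  case (1 k) then show ?case by simp
next
  case (2 k) then show ?case by (cases n) (simp_all add: algebra_simps)
next
  case (3 k m)
  have IH1: "B k (m + n + 1) = B k (m + 1) * B k (n + 1) + (1 - k) * B k m * B k n" using 3(2) .
  have IH2: "B k (Suc m + n + 1) = B k (Suc m + 1) * B k (n + 1) + (1 - k) * B k (Suc m) * B k n" using 3(1) .
  have "B k (Suc (Suc m) + n + 1) = 3 * k * B k (Suc m + n + 1) + (1 - k) * B k (m + n + 1)"
    by (metis B.simps(3) add_Suc add_Suc_right)
  also have "\<dots> = B k (n + 1) * (3 * k * B k (Suc m + 1) + (1 - k) * B k (m + 1))
     + (1 - k) * B k n * (3 * k * B k (Suc m) + (1 - k) * B k m)"
    unfolding IH1 IH2 by (simp add: algebra_simps)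
  also have "\<dots> = B k (n + 1) * B k (Suc (Suc m) + 1) + (1 - k) * B k n * B k (Suc (Suc m))"
    by simp
  finally show ?case by (simp add: algebra_simps)
qed

theorem mainTheorem20:
  fixes k :: int and n :: nat
  assumes "k \<ge> 1" and "n \<ge> 1"
  shows "B k (2 * n) = B k n * (B k (n + 1) + (1 - k) * B k (n - 1)) \<and>
         B k (2 * n - 1) = (B k n)^2 + (1 - k) * (B k (n - 1))^2"
proof -
  have a: "2 * n = (n - 1) + n + 1" "n - 1 + 1 = n" "2 * n - 1 = (n - 1) + (n - 1) + 1"
    using assms by auto
  have h1: "B k (2 * n) = B k n * B k (n + 1) + (1 - k) * B k (n - 1) * B k n"
    using B_add[of k "n - 1" n] a(1,2) by (metis mult_2)
  have h2: "B k (2 * n - 1) = B k n * B k n + (1 - k) * B k (n - 1) * B k (n - 1)"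
    using B_add[of k "n - 1" "n - 1"] a(2,3) by simp
  show ?thesis using h1 h2 by (simp add: algebra_simps power2_eq_square)
qed

end
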